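(* Let $x:[0,\infty)\to\mathbb{R}^m$ be of the form $x(t)=\sum_{i=0}^{n-1}y_i\,\theta_i(t)$ with vectors $y_0,\ldots,y_{n-1}\in\mathbb{R}^m$ and scalar functions $\theta_0,\ldots,\theta_{n-1}$ such that for all $t\ge 0$: (i) $\theta_i(t)\ge 0$ for all $i$; (ii) there are fixed scalars $\beta_0,\ldots,\beta_{n-1}>0$ with $\beta_i\theta_i(t)\ge\beta_j\theta_j(t)$ whenever $i\le j$; (iii) $\theta_0(t)\le 1$. Then for all $t\ge 0$, $$x(t)\in\operatorname{conv}\left\{\sum_{j=0}^{i-1}\frac{\beta_0}{\beta_j}y_j\;:\;i=0,1,\ldots,n\right\},$$ i.e. $x(t)$ lies in the convex hull of $0,\ \frac{\beta_0}{\beta_0}y_0,\ \ldots,\ \sum_{j=0}^{n-1}\frac{\beta_0}{\beta_j}y_j$.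
   Context: In the paper, $x$ is the solution of an $n$-th order linear companion system and the $y_i$ depend on its initial state, but the statement only uses the displayed representation. An empty sum is $0$; $\operatorname{conv}$ denotes convex hull. *)

theory Defs
  imports "HOL-Analysis.Analysis"
begin

end

theory Submission
  imports Defs
begin

lemma abel_aux:
  fixes P :: "nat \<Rightarrow> 'a::real_vector" and c :: "nat \<Rightarrow> real"
  shows "(\<Sum>i\<le>N. (if i = 0 then 1 - c 0 else c (i - 1) - c i) *\<^sub>R P i)
       = (\<Sum>i<N. c i *\<^sub>R (P (Suc i) - P i)) - c N *\<^sub>R P N + P 0"
  by (induction N) (auto simp: algebra_simps)

theorem proposition10:
  fixes n :: nat
    and y :: "nat \<Rightarrow> real ^ 'm"
    and \<theta> :: "nat \<Rightarrow> real \<Rightarrow> real"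
    and \<beta> :: "nat \<Rightarrow> real"
    and x :: "real \<Rightarrow> real ^ 'm"
  assumes x_def: "\<And>t. t \<ge> 0 \<Longrightarrow> x t = (\<Sum>i<n. \<theta> i t *\<^sub>R y i)"
    and beta_pos: "\<And>i. i < n \<Longrightarrow> \<beta> i > 0"
    and theta_nonneg: "\<And>t i. t \<ge> 0 \<Longrightarrow> i < n \<Longrightarrow> \<theta> i t \<ge> 0"
    and theta_ord: "\<And>t i j. t \<ge> 0 \<Longrightarrow> i \<le> j \<Longrightarrow> j < n \<Longrightarrow> \<beta> i * \<theta> i t \<ge> \<beta> j * \<theta> j t"
    and theta0_le1: "\<And>t. t \<ge> 0 \<Longrightarrow> \<theta> 0 t \<le> 1"
  shows "\<And>t. t \<ge> 0 \<Longrightarrow>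
    x t \<in> convex hull {(\<Sum>j<i. (\<beta> 0 / \<beta> j) *\<^sub>R y j) | i. i \<le> n}"
proof -
  fix t :: real
  assume t: "t \<ge> 0"
  define c where "c i = (if i < n then \<beta> i * \<theta> i t / \<beta> 0 else 0)" for i
  define P where "P i = (\<Sum>j<i. (\<beta> 0 / \<beta> j) *\<^sub>R y j)" for i
  define w where "w i = (if i = 0 then 1 - c 0 else c (i - 1) - c i)" for i
  have cnonneg: "c i \<ge> 0" for i
    using beta_pos[of i] beta_pos[of 0] theta_nonneg[OF t, of i] by (auto simp: c_def)
  have cmono: "c (Suc i) \<le> c i" for i
  proof (cases "Suc i < n")
    case True
    then have "\<beta> 0 > 0" using beta_pos by auto
    with theta_ord[OF t, of i "Suc i"] True show ?thesis
      by (auto simp: c_def divide_right_mono)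
  next
    case False
    then show ?thesis using cnonneg[of i] by (auto simp: c_def)
  qed
  have c0: "c 0 \<le> 1"
    using theta0_le1[OF t] beta_pos[of 0] by (auto simp: c_def)
  have wnn: "\<forall>i\<in>{..n}. 0 \<le> w i"
    using c0 cmono by (auto simp: w_def) (metis Suc_pred cmono)
  have wsum: "sum w {..n} = 1"
  proof -
    have "sum w {..N} = 1 - c N" for N
      by (induction N) (auto simp: w_def)
    then show ?thesis by (simp add: c_def)
  qed
  have "(\<Sum>i\<le>n. w i *\<^sub>R P i) = (\<Sum>i<n. c i *\<^sub>R (P (Suc i) - P i)) - c n *\<^sub>R P n + P 0"
    unfolding w_def by (rule abel_aux)
  also have "\<dots> = (\<Sum>i<n. c i *\<^sub>R (P (Suc i) - P i))"
    by (simp add: c_def P_def)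
  also have "\<dots> = (\<Sum>i<n. \<theta> i t *\<^sub>R y i)"
  proof (rule sum.cong)
    fix i assume "i \<in> {..<n}"
    then have i: "i < n" by simp
    then have "\<beta> i > 0" "\<beta> 0 > 0" using beta_pos by auto
    then show "c i *\<^sub>R (P (Suc i) - P i) = \<theta> i t *\<^sub>R y i"
      using i by (simp add: c_def P_def)
  qed simp
  finally have eq: "x t = (\<Sum>i\<le>n. w i *\<^sub>R P i)" using x_def[OF t] by simp
  show "x t \<in> convex hull {(\<Sum>j<i. (\<beta> 0 / \<beta> j) *\<^sub>R y j) | i. i \<le> n}"
    unfolding eq
    apply (rule convex_sum[OF _ convex_convex_hull])
    using wsum wnn by (auto simp: P_def intro!: hull_inc)
qed

end
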